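(* Let $\mathcal{G}=(\mathcal{V},\mathcal{E})$ be a finite tree with root $r$, edges oriented away from $r$, and incidence matrix $\Omega$. Let $f:[0,1]\to\mathcal{P}(\mathcal{V})$ be continuously differentiable with tails $F(t)_x$. Put $s(t)=\sum_{x\in\mathcal{V}}|\partial_t F(t)_x|$. (i) For every $t\in[0,1]$, $s(t)=|\dot f|_{W_1}(t)$. (ii) Suppose moreover that $f$ is a constant speed $W_1$-geodesic with $f(0)\neq f(1)$. Then $s(t)=W_1(f(0),f(1))>0$ for all $t$. Define the constant speed solution by $$v(t)_k=\operatorname{sign}(\partial_tF(t)_{\lceil k\rceil})\,s(t),\qquad g(t)_k=|\partial_tF(t)_{\lceil k\rceil}|/s(t).$$ Then $(f,v,g)$ satisfies the discrete transport equation, and $\mathcal{I}_q(v,g)=W_1(f(0),f(1))$ for every $q\ge 1$.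
   Context: For a finite graph $\mathcal{G}=(\mathcal{V},\mathcal{E})$ whose edges have been given an orientation, each edge $k$ goes from its tail vertex $\lfloor k\rfloor$ to its head vertex $\lceil k\rceil$. The incidence matrix $\Omega=(\omega_{x,k})$ has $\omega_{x,k}=1$ if $x=\lceil k\rceil$, $\omega_{x,k}=-1$ if $x=\lfloor k\rfloor$, and $\omega_{x,k}=0$ otherwise. $\mathcal{P}(\mathcal{V})$ and $\mathcal{P}(\mathcal{E})$ denote probability vectors on $\mathcal{V}$ and on $\mathcal{E}$. $W_1$ is the Wasserstein-1 distance on $\mathcal{P}(\mathcal{V})$ for the cost $d(x,y)$ equal to the shortest-path distance in the underlying undirected graph (unit edge lengths): $W_1(\mu,\nu)=\min_{\pi}\sum_{x,y}d(x,y)\pi(x,y)$, the minimum taken over couplings $\pi$ of $\mu$ and $\nu$. A path $f:[0,1]\to\mathcal{P}(\mathcal{V})$ is a constant speed $W_1$-geodesic if $W_1(f(s),f(t))=|s-t|\,W_1(f(0),f(1))$ for all $s,t\in[0,1]$. Its metric speed is $|\dot f|_{W_1}(t)=\lim_{h\to0}W_1(f(t+h),f(t))/|h|$. A triple $(f,v,g)$ consists of an absolutely continuous $f:[0,1]\to\mathcal{P}(\mathcal{V})$, a measurable $v:[0,1]\to\mathbb{R}^{\mathcal{E}}$ and a measurable $g:[0,1]\to\mathcal{P}(\mathcal{E})$. It satisfies the discrete transport equation if $\partial_t f(t)_x=\sum_{k}\omega_{x,k}v(t)_kg(t)_k$ for a.e. $t$ and all $x$. For $q\ge1$, $\mathcal{I}_q(v,g)=\big(\int_0^1\sum_{k\in\mathcal{E}}g(t)_k|v(t)_k|^q\,dt\big)^{1/q}$.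 For a tree rooted at $r$ with edges oriented away from $r$, $U(x)$ is the vertex set of the subtree rooted at $x$ (including $x$), and $F(t)_x=\sum_{y\in U(x)}f(t)_y$. *)

theory Defs
  imports "HOL-Analysis.Analysis"
begin

definition digraph :: "'a set \<Rightarrow> 'e set \<Rightarrow> ('e \<Rightarrow> 'a) \<Rightarrow> ('e \<Rightarrow> 'a) \<Rightarrow> bool" where
  "digraph V E tail head \<longleftrightarrow> finite V \<and> finite E \<and> V \<noteq> {} \<and>
     (\<forall>k\<in>E. tail k \<in> V \<and> head k \<in> V \<and> tail k \<noteq> head k)"

definition uadj :: "'e set \<Rightarrow> ('e \<Rightarrow> 'a) \<Rightarrow> ('e \<Rightarrow> 'a) \<Rightarrow> ('a \<times> 'a) set" where
  "uadj E tail head = {(tail k, head k) | k. k \<in> E} \<union> {(head k, tail k) | k. k \<in> E}"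

definition gdist :: "'e set \<Rightarrow> ('e \<Rightarrow> 'a) \<Rightarrow> ('e \<Rightarrow> 'a) \<Rightarrow> 'a \<Rightarrow> 'a \<Rightarrow> nat" where
  "gdist E tail head x y = (LEAST n. (x, y) \<in> (uadj E tail head) ^^ n)"

text \<open>Tree (connected and acyclic): connected with |E| = |V| - 1.\<close>
definition is_tree :: "'a set \<Rightarrow> 'e set \<Rightarrow> ('e \<Rightarrow> 'a) \<Rightarrow> ('e \<Rightarrow> 'a) \<Rightarrow> bool" where
  "is_tree V E tail head \<longleftrightarrow> digraph V E tail head \<and>
     (\<forall>x\<in>V. \<forall>y\<in>V. (x, y) \<in> (uadj E tail head)\<^sup>*) \<and> card E + 1 = card V"

text \<open>Tree rooted at r with all edges oriented away from r.\<close>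
definition rooted_tree_away :: "'a set \<Rightarrow> 'e set \<Rightarrow> ('e \<Rightarrow> 'a) \<Rightarrow> ('e \<Rightarrow> 'a) \<Rightarrow> 'a \<Rightarrow> bool" where
  "rooted_tree_away V E tail head r \<longleftrightarrow> is_tree V E tail head \<and> r \<in> V \<and>
     (\<forall>k\<in>E. gdist E tail head r (head k) = gdist E tail head r (tail k) + 1)"

definition incid :: "('e \<Rightarrow> 'a) \<Rightarrow> ('e \<Rightarrow> 'a) \<Rightarrow> 'a \<Rightarrow> 'e \<Rightarrow> real" where
  "incid tail head x k = (if x = head k then 1 else if x = tail k then -1 else 0)"

definition subtree :: "'a set \<Rightarrow> 'e set \<Rightarrow> ('e \<Rightarrow> 'a) \<Rightarrow> ('e \<Rightarrow> 'a) \<Rightarrow> 'a \<Rightarrow> 'a set" where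
  "subtree V E tail head x = {y \<in> V. (x, y) \<in> {(tail k, head k) | k. k \<in> E}\<^sup>*}"

definition probvec :: "'b set \<Rightarrow> ('b \<Rightarrow> real) \<Rightarrow> bool" where
  "probvec A \<mu> \<longleftrightarrow> (\<forall>x\<in>A. \<mu> x \<ge> 0) \<and> (\<forall>x. x \<notin> A \<longrightarrow> \<mu> x = 0) \<and> sum \<mu> A = 1"

definition coupling :: "'a set \<Rightarrow> ('a \<Rightarrow> real) \<Rightarrow> ('a \<Rightarrow> real) \<Rightarrow> ('a \<Rightarrow> 'a \<Rightarrow> real) \<Rightarrow> bool" where
  "coupling V \<mu> \<nu> \<pi> \<longleftrightarrow> (\<forall>x\<in>V. \<forall>y\<in>V. \<pi> x y \<ge> 0) \<and>
     (\<forall>x\<in>V. (\<Sum>y\<in>V. \<pi> x y) = \<mu> x) \<and> (\<forall>y\<in>V. (\<Sum>x\<in>V. \<pi> x y) = \<nu> y)"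

definition W1 :: "'a set \<Rightarrow> 'e set \<Rightarrow> ('e \<Rightarrow> 'a) \<Rightarrow> ('e \<Rightarrow> 'a) \<Rightarrow> ('a \<Rightarrow> real) \<Rightarrow> ('a \<Rightarrow> real) \<Rightarrow> real" where
  "W1 V E tail head \<mu> \<nu> = Inf {(\<Sum>x\<in>V. \<Sum>y\<in>V. real (gdist E tail head x y) * \<pi> x y) | \<pi>. coupling V \<mu> \<nu> \<pi>}"

definition abs_cont_on :: "real set \<Rightarrow> (real \<Rightarrow> real) \<Rightarrow> bool" where
  "abs_cont_on S h \<longleftrightarrow> (\<forall>\<epsilon>>0. \<exists>\<delta>>0. \<forall>n (a::nat \<Rightarrow> real) b.
      (\<forall>i<n. a i \<in> S \<and> b i \<in> S \<and> a i \<le> b i) \<and>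
      (\<forall>i<n. \<forall>j<n. i \<noteq> j \<longrightarrow> b i \<le> a j \<or> b j \<le> a i) \<and>
      (\<Sum>i<n. b i - a i) < \<delta> \<longrightarrow> (\<Sum>i<n. \<bar>h (b i) - h (a i)\<bar>) < \<epsilon>)"

definition transport_eq :: "'a set \<Rightarrow> 'e set \<Rightarrow> ('e \<Rightarrow> 'a) \<Rightarrow> ('e \<Rightarrow> 'a) \<Rightarrow>
    (real \<Rightarrow> 'a \<Rightarrow> real) \<Rightarrow> (real \<Rightarrow> 'e \<Rightarrow> real) \<Rightarrow> (real \<Rightarrow> 'e \<Rightarrow> real) \<Rightarrow> bool" where
  "transport_eq V E tail head f v g \<longleftrightarrow>
     (\<forall>t\<in>{0..1}. probvec V (f t)) \<and> (\<forall>x\<in>V. abs_cont_on {0..1} (\<lambda>t. f t x)) \<and>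
     (\<forall>k\<in>E. (\<lambda>t. v t k) \<in> borel_measurable (restrict_space lborel {0..1})) \<and>
     (\<forall>k\<in>E. (\<lambda>t. g t k) \<in> borel_measurable (restrict_space lborel {0..1})) \<and>
     (\<forall>t\<in>{0..1}. probvec E (g t)) \<and>
     (AE t in lborel. t \<in> {0..1} \<longrightarrow> (\<forall>x\<in>V.
        ((\<lambda>\<tau>. f \<tau> x) has_real_derivative (\<Sum>k\<in>E. incid tail head x k * v t k * g t k)) (at t within {0..1})))"

definition action_I :: "'e set \<Rightarrow> real \<Rightarrow> (real \<Rightarrow> 'e \<Rightarrow> real) \<Rightarrow> (real \<Rightarrow> 'e \<Rightarrow> real) \<Rightarrow> real" where
  "action_I E q v g = (integral {0..1} (\<lambda>t. \<Sum>k\<in>E. g t k * \<bar>v t k\<bar> powr q)) powr (1 / q)"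

definition has_W1_speed :: "'a set \<Rightarrow> 'e set \<Rightarrow> ('e \<Rightarrow> 'a) \<Rightarrow> ('e \<Rightarrow> 'a) \<Rightarrow>
    (real \<Rightarrow> 'a \<Rightarrow> real) \<Rightarrow> real \<Rightarrow> real \<Rightarrow> bool" where
  "has_W1_speed V E tail head f t c \<longleftrightarrow>
     ((\<lambda>h. W1 V E tail head (f (t + h)) (f t) / \<bar>h\<bar>) \<longlongrightarrow> c) (at 0 within {h. t + h \<in> {0..1}})"

definition W1_geodesic :: "'a set \<Rightarrow> 'e set \<Rightarrow> ('e \<Rightarrow> 'a) \<Rightarrow> ('e \<Rightarrow> 'a) \<Rightarrow> (real \<Rightarrow> 'a \<Rightarrow> real) \<Rightarrow> bool" where
  "W1_geodesic V E tail head f \<longleftrightarrow> (\<forall>s\<in>{0..1}. \<forall>t\<in>{0..1}.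
     W1 V E tail head (f s) (f t) = \<bar>s - t\<bar> * W1 V E tail head (f 0) (f 1))"

end

theory Submission
  imports Defs
begin

locale tok =
  fixes V :: "'a set" and E :: "'e set" and tail head :: "'e \<Rightarrow> 'a" and r :: 'a and dep :: "'a \<Rightarrow> nat"
  assumes finV: "finite V" and finE: "finite E" and rV: "r \<in> V"
    and endV: "\<And>k. k \<in> E \<Longrightarrow> tail k \<in> V \<and> head k \<in> V"
    and injh: "inj_on head E" and headE: "head ` E = V - {r}"
    and depE: "\<And>k. k \<in> E \<Longrightarrow> dep (head k) = dep (tail k) + 1"
begin

abbreviation "R \<equiv> {(tail k, head k) | k. k \<in> E}"
abbreviation "U x \<equiv> subtree V E tail head x"

lemma R_iff: "(a,b) \<in> R \<longleftrightarrow> (\<exists>k\<in>E. a = tail k \<and> b = head k)" by auto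

lemma mem_U: "y \<in> U x \<longleftrightarrow> y \<in> V \<and> (x,y) \<in> R\<^sup>*" by (simp add: subtree_def)

lemma U_sub: "U x \<subseteq> V" by (auto simp: subtree_def)

lemma finU: "finite (U x)" using U_sub finV finite_subset by blast

lemma dep_mono: "(x,y) \<in> R\<^sup>* \<Longrightarrow> dep x \<le> dep y"
  by (induction rule: rtrancl_induct) (auto simp: depE)

lemma dep_strict: "(x,y) \<in> R\<^sup>* \<Longrightarrow> x \<noteq> y \<Longrightarrow> dep x < dep y"
proof (induction rule: rtrancl_induct)
  case base then show ?case by simp
next
  case (step z y)
  then obtain k where "k \<in> E" "z = tail k" "y = head k" by auto
  then show ?case using dep_mono[OF step(1)] depE by fastforce
qed

lemma parent_unique: "k1 \<in> E \<Longrightarrow> k2 \<in> E \<Longrightarrow> head k1 = head k2 \<Longrightarrow> k1 = k2"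
  using injh by (auto simp: inj_on_def)

lemma comparable: "(a,y) \<in> R\<^sup>* \<Longrightarrow> (b,y) \<in> R\<^sup>* \<Longrightarrow> (a,b) \<in> R\<^sup>* \<or> (b,a) \<in> R\<^sup>*"
proof (induction arbitrary: b rule: rtrancl_induct)
  case base then show ?case by simp
next
  case (step z y)
  from step(4) show ?case
  proof (cases rule: rtranclE)
    case base then show ?thesis using rtrancl_into_rtrancl[OF step(1) step(2)] by simp
  next
    case (step w)
    from \<open>(z, y) \<in> R\<close> obtain k1 where k1: "k1 \<in> E" "z = tail k1" "y = head k1" by auto
    from \<open>(w, y) \<in> R\<close> obtain k2 where k2: "k2 \<in> E" "w = tail k2" "y = head k2" by auto
    have "k1 = k2" using parent_unique k1 k2 by auto
    then have "w = z" using k1 k2 by simp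
    then show ?thesis using step.IH step(1) by auto
  qed
qed

lemma step_equiv: "k0 \<in> E \<Longrightarrow> w \<noteq> head k0 \<Longrightarrow> (w, head k0) \<in> R\<^sup>* \<longleftrightarrow> (w, tail k0) \<in> R\<^sup>*"
proof
  assume k0: "k0 \<in> E" and w: "w \<noteq> head k0" and h: "(w, head k0) \<in> R\<^sup>*"
  from h show "(w, tail k0) \<in> R\<^sup>*"
  proof (cases rule: rtranclE)
    case base then show ?thesis using w by simp
  next
    case (step z)
    then obtain k where "k \<in> E" "z = tail k" "head k0 = head k" by auto
    then show ?thesis using parent_unique[of k0 k] k0 step by auto
  qed
next
  assume k0: "k0 \<in> E" and h: "(w, tail k0) \<in> R\<^sup>*"
  have "(tail k0, head k0) \<in> R" using k0 by auto
  with h show "(w, head k0) \<in> R\<^sup>*" by (rule rtrancl_into_rtrancl)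
qed

lemma ind_step: "k0 \<in> E \<Longrightarrow> k \<in> E \<Longrightarrow> k \<noteq> k0 \<Longrightarrow> (tail k0 \<in> U (head k) \<longleftrightarrow> head k0 \<in> U (head k))"
  using step_equiv[of k0 "head k"] parent_unique[of k k0] endV by (auto simp: mem_U)

lemma root_reach: "y \<in> V \<Longrightarrow> (r,y) \<in> R\<^sup>*"
proof (induction "dep y" arbitrary: y rule: less_induct)
  case less
  show ?case
  proof (cases "y = r")
    case True then show ?thesis by simp
  next
    case False
    then have "y \<in> head ` E" using headE less.prems by auto
    then obtain k where k: "k \<in> E" "y = head k" by auto
    then have "(r, tail k) \<in> R\<^sup>*" using less.hyps[of "tail k"] depE endV by auto
    moreover have "(tail k, y) \<in> R" using k by auto
    ultimately show ?thesis by (rule rtrancl_into_rtrancl)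
  qed
qed

lemma U_root: "U r = V" using root_reach by (auto simp: mem_U)

lemma tail_notin: "k \<in> E \<Longrightarrow> tail k \<notin> U (head k)"
  using dep_mono depE by (fastforce simp: mem_U)

lemma U_disj: "k1 \<in> E \<Longrightarrow> k2 \<in> E \<Longrightarrow> tail k1 = tail k2 \<Longrightarrow> k1 \<noteq> k2 \<Longrightarrow> U (head k1) \<inter> U (head k2) = {}"
proof (rule ccontr)
  assume a: "k1 \<in> E" "k2 \<in> E" "tail k1 = tail k2" "k1 \<noteq> k2" "U (head k1) \<inter> U (head k2) \<noteq> {}"
  then obtain y where "(head k1, y) \<in> R\<^sup>*" "(head k2, y) \<in> R\<^sup>*" by (auto simp: mem_U)
  then have c: "(head k1, head k2) \<in> R\<^sup>* \<or> (head k2, head k1) \<in> R\<^sup>*" by (rule comparable)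
  have "dep (head k1) = dep (head k2)" using a depE by simp
  then have "head k1 = head k2" using c dep_strict by fastforce
  then show False using a parent_unique by auto
qed

lemma U_decomp: "x \<in> V \<Longrightarrow> U x = insert x (\<Union>k\<in>{k\<in>E. tail k = x}. U (head k))"
proof
  assume x: "x \<in> V"
  show "U x \<subseteq> insert x (\<Union>k\<in>{k\<in>E. tail k = x}. U (head k))"
  proof
    fix y assume "y \<in> U x"
    then have y: "y \<in> V" "(x,y) \<in> R\<^sup>*" by (auto simp: mem_U)
    from y(2) show "y \<in> insert x (\<Union>k\<in>{k\<in>E. tail k = x}. U (head k))"
    proof (cases rule: converse_rtranclE)
      case base then show ?thesis by simp
    next
      case (step c)
      then obtain k where "k \<in> E" "x = tail k" "c = head k" by auto
      then show ?thesis using step y by (auto simp: mem_U)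
    qed
  qed
next
  assume x: "x \<in> V"
  show "insert x (\<Union>k\<in>{k\<in>E. tail k = x}. U (head k)) \<subseteq> U x"
  proof
    fix y assume "y \<in> insert x (\<Union>k\<in>{k\<in>E. tail k = x}. U (head k))"
    then consider "y = x" | k where "k \<in> E" "tail k = x" "y \<in> U (head k)" by auto
    then show "y \<in> U x"
    proof cases
      case 1 then show ?thesis using x by (simp add: mem_U)
    next
      case 2
      then have "(x, head k) \<in> R" by auto
      then show ?thesis using 2 by (auto simp: mem_U intro: converse_rtrancl_into_rtrancl)
    qed
  qed
qed

lemma sum_U: "x \<in> V \<Longrightarrow> (\<Sum>y\<in>U x. g y) = g x + (\<Sum>k\<in>{k\<in>E. tail k = x}. \<Sum>y\<in>U (head k). g y)"
proof -
  assume x: "x \<in> V"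
  have fin: "finite {k\<in>E. tail k = x}" using finE by simp
  have "(\<Sum>y\<in>(\<Union>k\<in>{k\<in>E. tail k = x}. U (head k)). g y) = (\<Sum>k\<in>{k\<in>E. tail k = x}. \<Sum>y\<in>U (head k). g y)"
    by (rule sum.UNION_disjoint[OF fin]) (auto simp: finU dest: U_disj)
  moreover have "x \<notin> (\<Union>k\<in>{k\<in>E. tail k = x}. U (head k))" using tail_notin by auto
  moreover have "finite (\<Union>k\<in>{k\<in>E. tail k = x}. U (head k))" using fin finU by auto
  ultimately show ?thesis using U_decomp[OF x] by simp
qed

lemma leaf_U: "k0 \<in> E \<Longrightarrow> (\<forall>k\<in>E. tail k \<noteq> head k0) \<Longrightarrow> U (head k0) = {head k0}"
proof -
  assume k0: "k0 \<in> E" and lf: "\<forall>k\<in>E. tail k \<noteq> head k0"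
  have "(head k0, y) \<in> R\<^sup>* \<Longrightarrow> y = head k0" for y
    by (erule converse_rtranclE) (use lf in auto)
  then show ?thesis using endV k0 by (auto simp: mem_U)
qed

definition ind :: "'e \<Rightarrow> 'a \<Rightarrow> real" where
  "ind k x = (if x \<in> U (head k) then 1 else 0)"

lemma adj_bound:
  assumes "(z,y) \<in> uadj E tail head"
  shows "(\<Sum>k\<in>E. \<bar>ind k z - ind k y\<bar>) \<le> 1"
proof -
  obtain k0 where k0: "k0 \<in> E" "(z = tail k0 \<and> y = head k0) \<or> (z = head k0 \<and> y = tail k0)"
    using assms by (auto simp: uadj_def)
  have z: "\<forall>k\<in>E - {k0}. \<bar>ind k z - ind k y\<bar> = 0"
    using k0 ind_step[of k0] by (auto simp: ind_def)
  have "(\<Sum>k\<in>E. \<bar>ind k z - ind k y\<bar>) = \<bar>ind k0 z - ind k0 y\<bar> + (\<Sum>k\<in>E - {k0}. \<bar>ind k z - ind k y\<bar>)"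
    using k0 finE by (simp add: sum.remove)
  also have "\<dots> = \<bar>ind k0 z - ind k0 y\<bar>" using z by simp
  also have "\<dots> \<le> 1" by (simp add: ind_def)
  finally show ?thesis .
qed

lemma path_bound: "(x,y) \<in> (uadj E tail head) ^^ n \<Longrightarrow> (\<Sum>k\<in>E. \<bar>ind k x - ind k y\<bar>) \<le> real n"
proof (induction n arbitrary: y)
  case 0 then show ?case by simp
next
  case (Suc n)
  then obtain z where z: "(x,z) \<in> (uadj E tail head) ^^ n" "(z,y) \<in> uadj E tail head" by auto
  have "(\<Sum>k\<in>E. \<bar>ind k x - ind k y\<bar>) \<le> (\<Sum>k\<in>E. \<bar>ind k x - ind k z\<bar> + \<bar>ind k z - ind k y\<bar>)"
    by (rule sum_mono) linarith
  also have "\<dots> = (\<Sum>k\<in>E. \<bar>ind k x - ind k z\<bar>) + (\<Sum>k\<in>E. \<bar>ind k z - ind k y\<bar>)" by (simp add: sum.distrib)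
  also have "\<dots> \<le> real n + 1" using Suc.IH[OF z(1)] adj_bound[OF z(2)] by linarith
  finally show ?case by simp
qed

end

definition Tsum :: "'a set \<Rightarrow> 'e set \<Rightarrow> ('e \<Rightarrow> 'a) \<Rightarrow> ('e \<Rightarrow> 'a) \<Rightarrow> ('a \<Rightarrow> real) \<Rightarrow> ('a \<Rightarrow> real) \<Rightarrow> real" where
  "Tsum V E tail head \<mu> \<nu> = (\<Sum>k\<in>E. \<bar>(\<Sum>y\<in>subtree V E tail head (head k). \<mu> y) - (\<Sum>y\<in>subtree V E tail head (head k). \<nu> y)\<bar>)"

definition cost :: "'a set \<Rightarrow> ('a \<Rightarrow> 'a \<Rightarrow> real) \<Rightarrow> ('a \<Rightarrow> 'a \<Rightarrow> real) \<Rightarrow> real" where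
  "cost V d \<pi> = (\<Sum>x\<in>V. \<Sum>y\<in>V. d x y * \<pi> x y)"

definition dist_ok :: "'a set \<Rightarrow> 'e set \<Rightarrow> ('e \<Rightarrow> 'a) \<Rightarrow> ('e \<Rightarrow> 'a) \<Rightarrow> ('a \<Rightarrow> 'a \<Rightarrow> real) \<Rightarrow> bool" where
  "dist_ok V E tail head d \<longleftrightarrow> (\<forall>x\<in>V. d x x = 0) \<and> (\<forall>x\<in>V. \<forall>y\<in>V. \<forall>z\<in>V. d x z \<le> d x y + d y z) \<and>
     (\<forall>k\<in>E. d (head k) (tail k) \<le> 1 \<and> d (tail k) (head k) \<le> 1)"

lemma sum_upd: fixes \<mu> :: "'x \<Rightarrow> real" shows "finite S \<Longrightarrow> (\<Sum>x\<in>S. (\<mu>(p := v)) x) = (if p \<in> S then (\<Sum>x\<in>S. \<mu> x) - \<mu> p + v else (\<Sum>x\<in>S. \<mu> x))"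
proof (cases "p \<in> S")
  case True
  assume fin: "finite S"
  have "(\<Sum>x\<in>S. (\<mu>(p := v)) x) = v + (\<Sum>x\<in>S - {p}. (\<mu>(p := v)) x)"
    using True fin by (simp add: sum.remove)
  also have "(\<Sum>x\<in>S - {p}. (\<mu>(p := v)) x) = (\<Sum>x\<in>S - {p}. \<mu> x)" by (rule sum.cong) auto
  also have "\<dots> = (\<Sum>x\<in>S. \<mu> x) - \<mu> p" using sum.remove[OF fin True, of \<mu>] by linarith
  finally show ?thesis using True by simp
next
  case False
  then show ?thesis by (auto intro!: sum.cong)
qed

lemma split_row:
  fixes V' :: "'a set" and d :: "'a \<Rightarrow> 'a \<Rightarrow> real"
  assumes fin: "finite V'" and p: "p \<in> V'" and l: "l \<notin> V'"
    and cp: "coupling V' \<mu>' \<nu> \<pi>'"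
    and mp: "\<mu>' p = \<mu> p + a" and mo: "\<forall>x\<in>V'. x \<noteq> p \<longrightarrow> \<mu>' x = \<mu> x"
    and ml: "\<mu> l = m + a" and nl: "\<nu> l = m" and a: "a \<ge> 0" and m: "m \<ge> 0" and mup: "\<mu> p \<ge> 0"
    and dll: "d l l = 0" and dl: "\<forall>y\<in>V'. d l y \<le> 1 + d p y"
  shows "\<exists>\<pi>. coupling (insert l V') \<mu> \<nu> \<pi> \<and> cost (insert l V') d \<pi> \<le> cost V' d \<pi>' + a"
proof -
  define c where "c = \<mu>' p"
  define w where "w y = \<pi>' p y * (a / c)" for y
  define \<pi> where "\<pi> x y = (if y = l then (if x = l then m else 0) else if x = l then w y
      else if x = p then \<pi>' p y - w y else \<pi>' x y)" for x y
  have pn: "\<forall>x\<in>V'. \<forall>y\<in>V'. \<pi>' x y \<ge> 0" and rows: "\<forall>x\<in>V'. (\<Sum>y\<in>V'. \<pi>' x y) = \<mu>' x"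
    and cols: "\<forall>y\<in>V'. (\<Sum>x\<in>V'. \<pi>' x y) = \<nu> y"
    using cp by (auto simp: coupling_def)
  have ca: "a \<le> c" using mp mup by (simp add: c_def)
  have ac0: "0 \<le> a / c" using a ca by simp
  have ac1: "a / c \<le> 1" using a ca by (cases "c = 0") auto
  have w0: "\<forall>y\<in>V'. 0 \<le> w y" unfolding w_def using pn p ac0 by (metis mult_nonneg_nonneg)
  have w1: "\<forall>y\<in>V'. w y \<le> \<pi>' p y" unfolding w_def using pn p ac1 by (metis mult_left_le)
  have sw: "(\<Sum>y\<in>V'. w y) = a"
  proof -
    have "(\<Sum>y\<in>V'. w y) = (\<Sum>y\<in>V'. \<pi>' p y) * (a / c)" unfolding w_def by (rule sum_distrib_right[symmetric])
    also have "\<dots> = c * (a / c)" using rows p by (simp add: c_def)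
    also have "\<dots> = a" using ca a by (cases "c = 0") auto
    finally show ?thesis .
  qed
  have cpl: "coupling (insert l V') \<mu> \<nu> \<pi>"
    unfolding coupling_def
  proof (intro conjI ballI)
    fix x y assume "x \<in> insert l V'" "y \<in> insert l V'"
    then show "0 \<le> \<pi> x y" using m w0 w1 pn p by (auto simp: \<pi>_def)
  next
    fix x assume x: "x \<in> insert l V'"
    have "(\<Sum>y\<in>insert l V'. \<pi> x y) = \<pi> x l + (\<Sum>y\<in>V'. \<pi> x y)" using fin l by simp
    also have "\<dots> = \<mu> x"
    proof (cases "x = l")
      case True
      have "(\<Sum>y\<in>V'. \<pi> x y) = (\<Sum>y\<in>V'. w y)" using True l by (auto simp: \<pi>_def intro!: sum.cong)
      then show ?thesis using True sw ml by (simp add: \<pi>_def)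
    next
      case False
      note xl = False
      show ?thesis
      proof (cases "x = p")
        case True
        have "(\<Sum>y\<in>V'. \<pi> x y) = (\<Sum>y\<in>V'. \<pi>' p y - w y)" using True xl l by (auto simp: \<pi>_def intro!: sum.cong)
        also have "\<dots> = c - a" using rows p sw by (simp add: sum_subtractf c_def)
        finally show ?thesis using True xl mp by (simp add: \<pi>_def c_def)
      next
        case False
        have "(\<Sum>y\<in>V'. \<pi> x y) = (\<Sum>y\<in>V'. \<pi>' x y)" using False xl l by (auto simp: \<pi>_def intro!: sum.cong)
        then show ?thesis using False xl x rows mo by (simp add: \<pi>_def)
      qed
    qed
    finally show "(\<Sum>y\<in>insert l V'. \<pi> x y) = \<mu> x" .
  next
    fix y assume y: "y \<in> insert l V'"
    have "(\<Sum>x\<in>insert l V'. \<pi> x y) = \<pi> l y + (\<Sum>x\<in>V'. \<pi> x y)" using fin l by simp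
    also have "\<dots> = \<nu> y"
    proof (cases "y = l")
      case True
      have "(\<Sum>x\<in>V'. \<pi> x y) = 0" using True l by (auto simp: \<pi>_def intro!: sum.neutral)
      then show ?thesis using True nl by (simp add: \<pi>_def)
    next
      case False
      have "(\<Sum>x\<in>V'. \<pi> x y) = (\<Sum>x\<in>V'. \<pi>' x y - (if x = p then w y else 0))"
        using False l by (auto simp: \<pi>_def intro!: sum.cong)
      also have "\<dots> = \<nu> y - w y" using False y cols p fin by (simp add: sum_subtractf)
      finally show ?thesis using False l by (simp add: \<pi>_def)
    qed
    finally show "(\<Sum>x\<in>insert l V'. \<pi> x y) = \<nu> y" .
  qed
  have "cost (insert l V') d \<pi> = (\<Sum>y\<in>insert l V'. d l y * \<pi> l y) + (\<Sum>x\<in>V'. \<Sum>y\<in>insert l V'. d x y * \<pi> x y)"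
    using fin l by (simp add: cost_def)
  also have "(\<Sum>y\<in>insert l V'. d l y * \<pi> l y) = (\<Sum>y\<in>V'. d l y * w y)"
    using fin l dll by (simp add: \<pi>_def) (auto intro!: sum.cong)
  also have "(\<Sum>x\<in>V'. \<Sum>y\<in>insert l V'. d x y * \<pi> x y) = (\<Sum>x\<in>V'. \<Sum>y\<in>V'. d x y * \<pi>' x y - (if x = p then d p y * w y else 0))"
    using fin l by (auto simp: \<pi>_def algebra_simps intro!: sum.cong)
  also have "\<dots> = cost V' d \<pi>' - (\<Sum>x\<in>V'. \<Sum>y\<in>V'. (if x = p then d p y * w y else 0))"
    by (simp add: sum_subtractf cost_def)
  also have "(\<Sum>x\<in>V'. \<Sum>y\<in>V'. (if x = p then d p y * w y else 0)) = (\<Sum>x\<in>V'. (if x = p then (\<Sum>y\<in>V'. d p y * w y) else 0))"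
    by (rule sum.cong) auto
  also have "\<dots> = (\<Sum>y\<in>V'. d p y * w y)" using fin p by simp
  finally have "cost (insert l V') d \<pi> = cost V' d \<pi>' + (\<Sum>y\<in>V'. (d l y - d p y) * w y)"
    by (simp add: algebra_simps sum_subtractf)
  also have "(\<Sum>y\<in>V'. (d l y - d p y) * w y) \<le> (\<Sum>y\<in>V'. w y)"
    proof (intro sum_mono)
    fix y assume y: "y \<in> V'"
    have "d l y - d p y \<le> 1" using dl y by auto
    then show "(d l y - d p y) * w y \<le> w y" using w0 y by (metis mult_left_le_one_le mult_right_mono mult_1)
  qed
  finally have "cost (insert l V') d \<pi> \<le> cost V' d \<pi>' + a" using sw by simp
  with cpl show ?thesis by blast
qed

lemma coupling_exists:
  assumes "card E = n" "tok V E tail head r dep" "dist_ok V E tail head d"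
    "\<forall>x\<in>V. 0 \<le> \<mu> x" "\<forall>x\<in>V. 0 \<le> \<nu> x" "sum \<mu> V = sum \<nu> V"
  shows "\<exists>\<pi>. coupling V \<mu> \<nu> \<pi> \<and> cost V d \<pi> \<le> Tsum V E tail head \<mu> \<nu>"
  using assms
proof (induction n arbitrary: V E d \<mu> \<nu>)
  case 0
  interpret tok V E tail head r dep by fact
  have E: "E = {}" using 0 finE by simp
  have V: "V = {r}" using headE rV E by auto
  define \<pi> where "\<pi> x y = (if x = r \<and> y = r then \<mu> r else 0)" for x y
  have "coupling V \<mu> \<nu> \<pi>" using 0(4-6) V by (auto simp: coupling_def \<pi>_def)
  moreover have "cost V d \<pi> \<le> Tsum V E tail head \<mu> \<nu>" using 0(3) V E by (simp add: cost_def dist_ok_def Tsum_def \<pi>_def)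
  ultimately show ?case by blast
next
  case (Suc n)
  interpret tok V E tail head r dep by fact
  have Ene: "E \<noteq> {}" using Suc.prems(1) by auto
  obtain k0 where k0: "k0 \<in> E" and kmax: "\<forall>k\<in>E. dep (head k) \<le> dep (head k0)"
  proof -
    have "Max ((\<lambda>k. dep (head k)) ` E) \<in> (\<lambda>k. dep (head k)) ` E" using Ene finE by simp
    then obtain k0 where "k0 \<in> E" "dep (head k0) = Max ((\<lambda>k. dep (head k)) ` E)" by auto
    moreover have "\<forall>k\<in>E. dep (head k) \<le> Max ((\<lambda>k. dep (head k)) ` E)" using finE by simp
    ultimately show ?thesis using that by metis
  qed
  define l where "l = head k0"
  define p where "p = tail k0"
  have lV: "l \<in> V" and pV: "p \<in> V" using endV k0 by (auto simp: l_def p_def)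
  have lr: "l \<noteq> r" using headE k0 l_def by auto
  have notail: "\<forall>k\<in>E. tail k \<noteq> l"
  proof
    fix k assume k: "k \<in> E"
    show "tail k \<noteq> l"
    proof
      assume "tail k = l"
      then have "dep (head k) = dep (head k0) + 1" using depE[OF k] l_def by simp
      then show False using kmax k by fastforce
    qed
  qed
  have pl: "p \<noteq> l" using notail k0 p_def by auto
  define V' where "V' = V - {l}"
  define E' where "E' = E - {k0}"
  have cardE': "card E' = n" using Suc.prems(1) k0 finE by (simp add: E'_def)
  have finV': "finite V'" using finV V'_def by simp
  have tok': "tok V' E' tail head r dep"
  proof
    show "finite V'" by (rule finV')
    show "finite E'" using finE E'_def by simp
    show "r \<in> V'" using rV lr V'_def by simp
    show "tail k \<in> V' \<and> head k \<in> V'" if "k \<in> E'" for k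
      using that endV notail parent_unique[of k k0] k0 by (auto simp: V'_def E'_def l_def)
    show "inj_on head E'" using injh by (auto simp: E'_def intro: inj_on_subset)
    show "head ` E' = V' - {r}"
    proof
      show "head ` E' \<subseteq> V' - {r}"
      proof
        fix x assume "x \<in> head ` E'"
        then obtain k where k: "k \<in> E" "k \<noteq> k0" "x = head k" by (auto simp: E'_def)
        then have "x \<noteq> l" using parent_unique[of k k0] k0 l_def by auto
        moreover have "x \<in> V - {r}" using headE k by auto
        ultimately show "x \<in> V' - {r}" by (simp add: V'_def)
      qed
      show "V' - {r} \<subseteq> head ` E'"
      proof
        fix x assume x: "x \<in> V' - {r}"
        then have "x \<in> head ` E" using headE by (auto simp: V'_def)
        then obtain k where "k \<in> E" "x = head k" by auto
        then show "x \<in> head ` E'" using x by (auto simp: V'_def E'_def l_def)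
      qed
    qed
    show "dep (head k) = dep (tail k) + 1" if "k \<in> E'" for k using that depE E'_def by auto
  qed
  have subt: "subtree V' E' tail head x = subtree V E tail head x - {l}" for x
  proof -
    have RsubR: "{(tail k, head k) |k. k \<in> E'} \<subseteq> R" by (auto simp: E'_def)
    have backw: "(x,y) \<in> R\<^sup>* \<Longrightarrow> y \<noteq> l \<Longrightarrow> (x,y) \<in> {(tail k, head k) |k. k \<in> E'}\<^sup>*" for y
    proof (induction rule: rtrancl_induct)
      case base show ?case by simp
    next
      case (step z y)
      obtain k where k: "k \<in> E" "z = tail k" "y = head k" using step(2) by auto
      have "k \<noteq> k0" using step(4) k l_def by auto
      then have zy: "(z,y) \<in> {(tail k, head k) |k. k \<in> E'}" using k by (auto simp: E'_def)
      have "z \<noteq> l" using notail k by auto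
      then have "(x,z) \<in> {(tail k, head k) |k. k \<in> E'}\<^sup>*" using step(3) by simp
      then show ?case using zy by (rule rtrancl_into_rtrancl)
    qed
    show ?thesis
      unfolding subtree_def V'_def using backw rtrancl_mono[OF RsubR] by auto
  qed
  have Ul: "subtree V E tail head l = {l}" using leaf_U[OF k0] notail l_def by auto
  have key: "\<exists>\<pi>. coupling V \<mu> \<nu> \<pi> \<and> cost V d \<pi> \<le> Tsum V E tail head \<mu> \<nu>"
    if dok: "dist_ok V E tail head d" and mu: "\<forall>x\<in>V. 0 \<le> \<mu> x" and nu: "\<forall>x\<in>V. 0 \<le> \<nu> x"
      and sums: "sum \<mu> V = sum \<nu> V" and le: "\<nu> l \<le> \<mu> l" for d \<mu> \<nu>
  proof -
    define a where "a = \<mu> l - \<nu> l"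
    define \<mu>' where "\<mu>' = \<mu>(p := \<mu> p + a)"
    have dok': "dist_ok V' E' tail head d" using dok by (auto simp: dist_ok_def V'_def E'_def)
    have mu': "\<forall>x\<in>V'. 0 \<le> \<mu>' x" using mu le pV by (auto simp: \<mu>'_def a_def V'_def)
    have nu': "\<forall>x\<in>V'. 0 \<le> \<nu> x" using nu V'_def by auto
    have pV': "p \<in> V'" using pV pl V'_def by auto
    have sV: "sum \<mu> V = \<mu> l + sum \<mu> V'" "sum \<nu> V = \<nu> l + sum \<nu> V'"
      using sum.remove[OF finV lV] V'_def by auto
    have "sum \<mu>' V' = sum \<mu> V' + a" using sum_upd[OF finV', of \<mu> p "\<mu> p + a"] pV' by (simp add: \<mu>'_def)
    then have sums': "sum \<mu>' V' = sum \<nu> V'" using sV sums a_def by linarith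
    obtain \<pi>' where \<pi>': "coupling V' \<mu>' \<nu> \<pi>'" "cost V' d \<pi>' \<le> Tsum V' E' tail head \<mu>' \<nu>"
      using Suc.IH[OF cardE' tok' dok' mu' nu' sums'] by blast
    have lV': "l \<notin> V'" by (simp add: V'_def)
    have dlp: "d l p \<le> 1" using dok k0 by (simp add: dist_ok_def l_def p_def)
    have dl: "\<forall>y\<in>V'. d l y \<le> 1 + d p y"
    proof
      fix y assume "y \<in> V'"
      then have "d l y \<le> d l p + d p y" using dok lV pV by (auto simp: dist_ok_def V'_def)
      then show "d l y \<le> 1 + d p y" using dlp by linarith
    qed
    have "\<exists>\<pi>. coupling (insert l V') \<mu> \<nu> \<pi> \<and> cost (insert l V') d \<pi> \<le> cost V' d \<pi>' + a"
    proof (rule split_row[OF finV' pV' lV' \<pi>'(1), of \<mu> a "\<nu> l" d])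
      show "\<mu>' p = \<mu> p + a" by (simp add: \<mu>'_def)
      show "\<forall>x\<in>V'. x \<noteq> p \<longrightarrow> \<mu>' x = \<mu> x" by (simp add: \<mu>'_def)
      show "\<mu> l = \<nu> l + a" by (simp add: a_def)
      show "\<nu> l = \<nu> l" by simp
      show "0 \<le> a" using le by (simp add: a_def)
      show "0 \<le> \<nu> l" using nu lV by simp
      show "0 \<le> \<mu> p" using mu pV by simp
      show "d l l = 0" using dok lV by (simp add: dist_ok_def)
      show "\<forall>y\<in>V'. d l y \<le> 1 + d p y" by (rule dl)
    qed
    then obtain \<pi> where \<pi>: "coupling (insert l V') \<mu> \<nu> \<pi>" "cost (insert l V') d \<pi> \<le> cost V' d \<pi>' + a"
      by blast
    have iV: "insert l V' = V" using lV V'_def by auto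
    have T: "Tsum V E tail head \<mu> \<nu> = a + Tsum V' E' tail head \<mu>' \<nu>"
    proof -
      have "Tsum V E tail head \<mu> \<nu> = \<bar>(\<Sum>y\<in>U l. \<mu> y) - (\<Sum>y\<in>U l. \<nu> y)\<bar> +
          (\<Sum>k\<in>E'. \<bar>(\<Sum>y\<in>U (head k). \<mu> y) - (\<Sum>y\<in>U (head k). \<nu> y)\<bar>)"
        unfolding Tsum_def using sum.remove[OF finE k0] by (simp add: E'_def l_def)
      also have "\<bar>(\<Sum>y\<in>U l. \<mu> y) - (\<Sum>y\<in>U l. \<nu> y)\<bar> = a" using Ul le a_def by simp
      also have "(\<Sum>k\<in>E'. \<bar>(\<Sum>y\<in>U (head k). \<mu> y) - (\<Sum>y\<in>U (head k). \<nu> y)\<bar>) = Tsum V' E' tail head \<mu>' \<nu>"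
        unfolding Tsum_def
      proof (rule sum.cong[OF refl])
        fix k assume k: "k \<in> E'"
        have kE: "k \<in> E" "k \<noteq> k0" using k E'_def by auto
        have eq: "p \<in> U (head k) \<longleftrightarrow> l \<in> U (head k)" using ind_step[OF k0 kE(1) kE(2)] by (simp add: p_def l_def)
        have fU: "finite (U (head k))" by (rule finU)
        show "\<bar>(\<Sum>y\<in>U (head k). \<mu> y) - (\<Sum>y\<in>U (head k). \<nu> y)\<bar> =
          \<bar>(\<Sum>y\<in>subtree V' E' tail head (head k). \<mu>' y) - (\<Sum>y\<in>subtree V' E' tail head (head k). \<nu> y)\<bar>"
        proof (cases "l \<in> U (head k)")
          case True
          have pU: "p \<in> U (head k) - {l}" using True eq pl by auto
          have f2: "finite (U (head k) - {l})" using fU by simp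
          have "(\<Sum>y\<in>U (head k) - {l}. \<mu>' y) = (\<Sum>y\<in>U (head k) - {l}. \<mu> y) + a"
            using sum_upd[OF f2, of \<mu> p "\<mu> p + a"] pU by (simp add: \<mu>'_def)
          moreover have "(\<Sum>y\<in>U (head k). \<mu> y) = \<mu> l + (\<Sum>y\<in>U (head k) - {l}. \<mu> y)"
            using sum.remove[OF fU True] by simp
          moreover have "(\<Sum>y\<in>U (head k). \<nu> y) = \<nu> l + (\<Sum>y\<in>U (head k) - {l}. \<nu> y)"
            using sum.remove[OF fU True] by simp
          ultimately show ?thesis using subt a_def by simp
        next
          case False
          have pU: "p \<notin> U (head k)" using False eq by auto
          have "U (head k) - {l} = U (head k)" using False by auto
          moreover have "(\<Sum>y\<in>U (head k). \<mu>' y) = (\<Sum>y\<in>U (head k). \<mu> y)"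
            using sum_upd[OF fU, of \<mu> p "\<mu> p + a"] pU by (simp add: \<mu>'_def)
          ultimately show ?thesis using subt by simp
        qed
      qed
      finally show ?thesis .
    qed
    have "cost V d \<pi> \<le> Tsum V E tail head \<mu> \<nu>" using \<pi>(2) \<pi>'(2) T iV by simp
    then show ?thesis using \<pi>(1) iV by auto
  qed
  show ?case
  proof (cases "\<nu> l \<le> \<mu> l")
    case True
    then show ?thesis using key Suc.prems by blast
  next
    case False
    have dT: "dist_ok V E tail head (\<lambda>x y. d y x)"
      using Suc.prems(3) unfolding dist_ok_def by (metis add.commute)
    have "\<mu> l \<le> \<nu> l" using False by linarith
    from key[OF dT Suc.prems(5) Suc.prems(4) Suc.prems(6)[symmetric] this]
    obtain \<pi> where \<pi>: "coupling V \<nu> \<mu> \<pi>" "cost V (\<lambda>x y. d y x) \<pi> \<le> Tsum V E tail head \<nu> \<mu>"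
      by blast
    have "coupling V \<mu> \<nu> (\<lambda>x y. \<pi> y x)" using \<pi>(1) by (auto simp: coupling_def)
    moreover have "cost V d (\<lambda>x y. \<pi> y x) = cost V (\<lambda>x y. d y x) \<pi>"
      unfolding cost_def by (rule sum.swap)
    moreover have "Tsum V E tail head \<nu> \<mu> = Tsum V E tail head \<mu> \<nu>"
      unfolding Tsum_def by (simp add: abs_minus_commute)
    ultimately show ?thesis using \<pi>(2) by auto
  qed
qed

lemma gdist_path:
  assumes "(x,y) \<in> (uadj E tail head)\<^sup>*"
  shows "(x,y) \<in> (uadj E tail head) ^^ (gdist E tail head x y)"
proof -
  obtain n where "(x,y) \<in> (uadj E tail head) ^^ n" using assms rtrancl_power by blast
  then show ?thesis unfolding gdist_def by (rule LeastI)
qed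

lemma gdist_le: "(x,y) \<in> (uadj E tail head) ^^ n \<Longrightarrow> gdist E tail head x y \<le> n"
  unfolding gdist_def by (rule Least_le)

lemma gdist_refl: "gdist E tail head x x = 0"
proof -
  have "(x,x) \<in> (uadj E tail head) ^^ 0" by simp
  then show ?thesis using gdist_le by fastforce
qed

lemma rooted_conn: "rooted_tree_away V E tail head r \<Longrightarrow> x \<in> V \<Longrightarrow> y \<in> V \<Longrightarrow> (x,y) \<in> (uadj E tail head)\<^sup>*"
  by (simp add: rooted_tree_away_def is_tree_def)

lemma rooted_tok:
  assumes rt: "rooted_tree_away V E tail head r"
  shows "tok V E tail head r (gdist E tail head r)"
proof -
  have dg: "digraph V E tail head" and cE: "card E + 1 = card V" and rV: "r \<in> V"
    and depE: "\<forall>k\<in>E. gdist E tail head r (head k) = gdist E tail head r (tail k) + 1"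
    using rt by (auto simp: rooted_tree_away_def is_tree_def)
  have finV: "finite V" and finE: "finite E" and endV: "\<And>k. k \<in> E \<Longrightarrow> tail k \<in> V \<and> head k \<in> V"
    using dg by (auto simp: digraph_def)
  have hsub: "head ` E \<subseteq> V - {r}"
  proof
    fix x assume "x \<in> head ` E"
    then obtain k where k: "k \<in> E" "x = head k" by auto
    have "x \<noteq> r"
    proof
      assume "x = r"
      then have "gdist E tail head r (head k) = 0" using k gdist_refl by simp
      then show False using depE k by simp
    qed
    then show "x \<in> V - {r}" using endV k by auto
  qed
  have hsup: "V - {r} \<subseteq> head ` E"
  proof
    fix x assume x: "x \<in> V - {r}"
    define n where "n = gdist E tail head r x"
    have p: "(r,x) \<in> (uadj E tail head) ^^ n" unfolding n_def
      by (rule gdist_path) (use rooted_conn[OF rt] rV x in auto)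
    show "x \<in> head ` E"
    proof (cases n)
      case 0 then show ?thesis using p x by simp
    next
      case (Suc m)
      then obtain z where z: "(r,z) \<in> (uadj E tail head) ^^ m" "(z,x) \<in> uadj E tail head" using p by auto
      have gz: "gdist E tail head r z \<le> m" using gdist_le[OF z(1)] .
      from z(2) obtain k where k: "k \<in> E" "(z = tail k \<and> x = head k) \<or> (z = head k \<and> x = tail k)"
        by (auto simp: uadj_def)
      show ?thesis
      proof (cases "z = tail k \<and> x = head k")
        case True then show ?thesis using k by auto
      next
        case False
        then have "z = head k" "x = tail k" using k by auto
        then have "gdist E tail head r z = n + 1" using depE k n_def by simp
        then show ?thesis using gz Suc by simp
      qed
    qed
  qed
  have hE: "head ` E = V - {r}" using hsub hsup by auto
  have "card (head ` E) = card E" using hE cE finV rV by simp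
  then have inj: "inj_on head E" using finE by (simp add: inj_on_iff_eq_card)
  show ?thesis
    by (rule tok.intro) (use finV finE rV endV inj hE depE in auto)
qed

lemma rooted_dist:
  assumes rt: "rooted_tree_away V E tail head r"
  shows "dist_ok V E tail head (\<lambda>x y. real (gdist E tail head x y))"
  unfolding dist_ok_def
proof (intro conjI ballI)
  fix x assume "x \<in> V" then show "real (gdist E tail head x x) = 0" by (simp add: gdist_refl)
next
  fix x y z assume xyz: "x \<in> V" "y \<in> V" "z \<in> V"
  have a: "(x,y) \<in> (uadj E tail head) ^^ (gdist E tail head x y)"
    by (rule gdist_path) (rule rooted_conn[OF rt xyz(1,2)])
  have b: "(y,z) \<in> (uadj E tail head) ^^ (gdist E tail head y z)"
    by (rule gdist_path) (rule rooted_conn[OF rt xyz(2,3)])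
  have "(x,z) \<in> (uadj E tail head) ^^ (gdist E tail head x y + gdist E tail head y z)"
    using a b by (auto simp: relpow_add)
  then show "real (gdist E tail head x z) \<le> real (gdist E tail head x y) + real (gdist E tail head y z)"
    using gdist_le by fastforce
next
  fix k assume k: "k \<in> E"
  have "(head k, tail k) \<in> (uadj E tail head) ^^ 1"
    using k by (auto simp: uadj_def)
  then show "real (gdist E tail head (head k) (tail k)) \<le> 1"
    using gdist_le by fastforce
next
  fix k assume k: "k \<in> E"
  have "(tail k, head k) \<in> (uadj E tail head) ^^ 1"
    using k by (auto simp: uadj_def)
  then show "real (gdist E tail head (tail k) (head k)) \<le> 1"
    using gdist_le by fastforce
qed

lemma lower_bound:
  assumes rt: "rooted_tree_away V E tail head r" and cp: "coupling V \<mu> \<nu> \<pi>"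
  shows "Tsum V E tail head \<mu> \<nu> \<le> cost V (\<lambda>x y. real (gdist E tail head x y)) \<pi>"
proof -
  interpret tok V E tail head r "gdist E tail head r" by (rule rooted_tok[OF rt])
  have pn: "\<forall>x\<in>V. \<forall>y\<in>V. \<pi> x y \<ge> 0" and rows: "\<forall>x\<in>V. (\<Sum>y\<in>V. \<pi> x y) = \<mu> x"
    and cols: "\<forall>y\<in>V. (\<Sum>x\<in>V. \<pi> x y) = \<nu> y"
    using cp by (auto simp: coupling_def)
  have gb: "(\<Sum>k\<in>E. \<bar>ind k x - ind k y\<bar>) \<le> real (gdist E tail head x y)" if "x \<in> V" "y \<in> V" for x y
    by (rule path_bound, rule gdist_path, rule rooted_conn[OF rt that])
  have indsum: "(\<Sum>y\<in>U (head k). g y) = (\<Sum>x\<in>V. ind k x * g x)" for k and g :: "'a \<Rightarrow> real"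
  proof -
    have "(\<Sum>x\<in>V. ind k x * g x) = (\<Sum>x\<in>V. if x \<in> U (head k) then g x else 0)"
      by (rule sum.cong) (auto simp: ind_def)
    also have "\<dots> = (\<Sum>x\<in>V \<inter> U (head k). g x)" using finV by (simp add: sum.inter_restrict)
    also have "V \<inter> U (head k) = U (head k)" using U_sub by auto
    finally show ?thesis by simp
  qed
  have trm: "(\<Sum>y\<in>U (head k). \<mu> y) - (\<Sum>y\<in>U (head k). \<nu> y) = (\<Sum>x\<in>V. \<Sum>y\<in>V. (ind k x - ind k y) * \<pi> x y)" for k
  proof -
    have "(\<Sum>y\<in>U (head k). \<mu> y) = (\<Sum>x\<in>V. ind k x * (\<Sum>y\<in>V. \<pi> x y))"
      using indsum rows by simp
    also have "\<dots> = (\<Sum>x\<in>V. \<Sum>y\<in>V. ind k x * \<pi> x y)" by (simp add: sum_distrib_left)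
    finally have "(\<Sum>y\<in>U (head k). \<mu> y) = (\<Sum>x\<in>V. \<Sum>y\<in>V. ind k x * \<pi> x y)" .
    moreover have "(\<Sum>y\<in>U (head k). \<nu> y) = (\<Sum>x\<in>V. \<Sum>y\<in>V. ind k y * \<pi> x y)"
    proof -
      have "(\<Sum>y\<in>U (head k). \<nu> y) = (\<Sum>y\<in>V. ind k y * (\<Sum>x\<in>V. \<pi> x y))"
        using indsum cols by simp
      also have "\<dots> = (\<Sum>y\<in>V. \<Sum>x\<in>V. ind k y * \<pi> x y)" by (simp add: sum_distrib_left)
      also have "\<dots> = (\<Sum>x\<in>V. \<Sum>y\<in>V. ind k y * \<pi> x y)" by (rule sum.swap)
      finally show ?thesis .
    qed
    ultimately show ?thesis by (simp add: sum_subtractf left_diff_distrib)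
  qed
  have "Tsum V E tail head \<mu> \<nu> = (\<Sum>k\<in>E. \<bar>\<Sum>x\<in>V. \<Sum>y\<in>V. (ind k x - ind k y) * \<pi> x y\<bar>)"
    unfolding Tsum_def using trm by simp
  also have "\<dots> \<le> (\<Sum>k\<in>E. \<Sum>x\<in>V. \<Sum>y\<in>V. \<bar>ind k x - ind k y\<bar> * \<pi> x y)"
  proof (rule sum_mono)
    fix k
    have "\<bar>\<Sum>x\<in>V. \<Sum>y\<in>V. (ind k x - ind k y) * \<pi> x y\<bar> \<le> (\<Sum>x\<in>V. \<bar>\<Sum>y\<in>V. (ind k x - ind k y) * \<pi> x y\<bar>)"
      by (rule sum_abs)
    also have "\<dots> \<le> (\<Sum>x\<in>V. \<Sum>y\<in>V. \<bar>(ind k x - ind k y) * \<pi> x y\<bar>)"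
      by (intro sum_mono sum_abs)
    also have "\<dots> = (\<Sum>x\<in>V. \<Sum>y\<in>V. \<bar>ind k x - ind k y\<bar> * \<pi> x y)"
      using pn by (intro sum.cong refl) (simp add: abs_mult)
    finally show "\<bar>\<Sum>x\<in>V. \<Sum>y\<in>V. (ind k x - ind k y) * \<pi> x y\<bar> \<le> (\<Sum>x\<in>V. \<Sum>y\<in>V. \<bar>ind k x - ind k y\<bar> * \<pi> x y)" .
  qed
  also have "\<dots> = (\<Sum>x\<in>V. \<Sum>y\<in>V. (\<Sum>k\<in>E. \<bar>ind k x - ind k y\<bar>) * \<pi> x y)"
    by (simp add: sum_distrib_right sum.swap[of _ E] sum.swap[of _ E V])
  also have "\<dots> \<le> cost V (\<lambda>x y. real (gdist E tail head x y)) \<pi>"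
    unfolding cost_def using gb pn by (intro sum_mono mult_right_mono) auto
  finally show ?thesis .
qed

lemma W1_tree:
  assumes rt: "rooted_tree_away V E tail head r"
    and mu: "\<forall>x\<in>V. 0 \<le> \<mu> x" and nu: "\<forall>x\<in>V. 0 \<le> \<nu> x" and sums: "sum \<mu> V = sum \<nu> V"
  shows "W1 V E tail head \<mu> \<nu> = Tsum V E tail head \<mu> \<nu>"
proof -
  obtain \<pi> where \<pi>: "coupling V \<mu> \<nu> \<pi>" "cost V (\<lambda>x y. real (gdist E tail head x y)) \<pi> \<le> Tsum V E tail head \<mu> \<nu>"
    using coupling_exists[OF refl rooted_tok[OF rt] rooted_dist[OF rt] mu nu sums] by blast
  have eq: "cost V (\<lambda>x y. real (gdist E tail head x y)) \<pi> = Tsum V E tail head \<mu> \<nu>"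
    using \<pi> lower_bound[OF rt \<pi>(1)] by linarith
  show ?thesis unfolding W1_def
  proof (rule cInf_eq_minimum)
    show "Tsum V E tail head \<mu> \<nu> \<in> {\<Sum>x\<in>V. \<Sum>y\<in>V. real (gdist E tail head x y) * \<pi> x y |\<pi>. coupling V \<mu> \<nu> \<pi>}"
      by (rule CollectI, rule exI[of _ \<pi>]) (use eq \<pi>(1) in \<open>auto simp: cost_def\<close>)
  next
    fix c assume "c \<in> {\<Sum>x\<in>V. \<Sum>y\<in>V. real (gdist E tail head x y) * \<pi> x y |\<pi>. coupling V \<mu> \<nu> \<pi>}"
    then obtain \<pi>' where "coupling V \<mu> \<nu> \<pi>'" "c = cost V (\<lambda>x y. real (gdist E tail head x y)) \<pi>'"
      unfolding cost_def by blast
    then show "Tsum V E tail head \<mu> \<nu> \<le> c" using lower_bound[OF rt] by simp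
  qed
qed

lemma dq_tendsto:
  fixes G :: "real \<Rightarrow> real"
  assumes "(G has_real_derivative D) (at t within S)"
  shows "((\<lambda>h. (G (t + h) - G t) / h) \<longlongrightarrow> D) (at 0 within {h. t + h \<in> S})"
proof -
  have a: "((\<lambda>y. (G y - G t) / (y - t)) \<longlongrightarrow> D) (at t within S)"
    using assms by (simp add: has_field_derivative_iff)
  have b: "filterlim (\<lambda>h. t + h) (at t within S) (at 0 within {h. t + h \<in> S})"
    unfolding filterlim_at
  proof
    show "\<forall>\<^sub>F h in at 0 within {h. t + h \<in> S}. t + h \<in> S \<and> t + h \<noteq> t"
      by (simp add: eventually_at_filter)
    have "((\<lambda>h. t + h) \<longlongrightarrow> t + 0) (at 0 within {h. t + h \<in> S})"
      by (intro tendsto_intros)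
    then show "((\<lambda>h. t + h) \<longlongrightarrow> t) (at 0 within {h. t + h \<in> S})" by simp
  qed
  have "((\<lambda>h. (G (t + h) - G t) / ((t + h) - t)) \<longlongrightarrow> D) (at 0 within {h. t + h \<in> S})"
    using filterlim_compose[OF a b] by simp
  then show ?thesis by simp
qed

lemma nontriv01:
  assumes t: "t \<in> {0..1::real}"
  shows "at 0 within {h. t + h \<in> {0..1}} \<noteq> bot"
  unfolding not_trivial_limit_within_ball
proof (intro allI impI)
  fix e :: real assume e: "e > 0"
  define h where "h = (if t \<le> 1/2 then min (e/2) (1/2) else - min (e/2) (1/2))"
  have "h \<in> {h. t + h \<in> {0..1}} \<inter> ball 0 e - {0}"
    using t e by (auto simp: h_def dist_real_def)
  then show "{h. t + h \<in> {0..1}} \<inter> ball 0 e - {0} \<noteq> {}" by blast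
qed

lemma absc:
  fixes h h' :: "real \<Rightarrow> real"
  assumes d: "\<forall>t\<in>{0..1}. (h has_real_derivative h' t) (at t within {0..1})"
    and c: "continuous_on {0..1} h'"
  shows "abs_cont_on {0..1} h"
proof -
  have "bounded (h' ` {0..1})" by (rule compact_imp_bounded, rule compact_continuous_image[OF c]) simp
  then obtain B where B: "B > 0" "\<forall>x\<in>{0..1}. \<bar>h' x\<bar> \<le> B" unfolding bounded_pos by auto
  have lip: "\<bar>h y - h x\<bar> \<le> B * \<bar>y - x\<bar>" if "x \<in> {0..1}" "y \<in> {0..1}" for x y
    using field_differentiable_bound[of "{0..1}" h h' B y x] d B that by auto
  show ?thesis unfolding abs_cont_on_def
  proof (intro allI impI)
    fix \<epsilon> :: real assume \<epsilon>: "\<epsilon> > 0"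
    show "\<exists>\<delta>>0. \<forall>n (a::nat \<Rightarrow> real) b. (\<forall>i<n. a i \<in> {0..1} \<and> b i \<in> {0..1} \<and> a i \<le> b i) \<and>
      (\<forall>i<n. \<forall>j<n. i \<noteq> j \<longrightarrow> b i \<le> a j \<or> b j \<le> a i) \<and> (\<Sum>i<n. b i - a i) < \<delta> \<longrightarrow>
      (\<Sum>i<n. \<bar>h (b i) - h (a i)\<bar>) < \<epsilon>"
    proof (rule exI[of _ "\<epsilon> / B"], rule conjI)
      show "\<epsilon> / B > 0" using \<epsilon> B by simp
    next
      show "\<forall>n (a::nat \<Rightarrow> real) b. (\<forall>i<n. a i \<in> {0..1} \<and> b i \<in> {0..1} \<and> a i \<le> b i) \<and>
      (\<forall>i<n. \<forall>j<n. i \<noteq> j \<longrightarrow> b i \<le> a j \<or> b j \<le> a i) \<and> (\<Sum>i<n. b i - a i) < \<epsilon> / B \<longrightarrow>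
      (\<Sum>i<n. \<bar>h (b i) - h (a i)\<bar>) < \<epsilon>"
      proof (intro allI impI)
      fix n and a b :: "nat \<Rightarrow> real"
      assume H: "(\<forall>i<n. a i \<in> {0..1} \<and> b i \<in> {0..1} \<and> a i \<le> b i) \<and>
        (\<forall>i<n. \<forall>j<n. i \<noteq> j \<longrightarrow> b i \<le> a j \<or> b j \<le> a i) \<and> (\<Sum>i<n. b i - a i) < \<epsilon> / B"
      have "(\<Sum>i<n. \<bar>h (b i) - h (a i)\<bar>) \<le> (\<Sum>i<n. B * (b i - a i))"
      proof (intro sum_mono)
        fix i assume "i \<in> {..<n}"
        then have "a i \<in> {0..1}" "b i \<in> {0..1}" "a i \<le> b i" using H by auto
        then show "\<bar>h (b i) - h (a i)\<bar> \<le> B * (b i - a i)" using lip[of "a i" "b i"] by simp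
      qed
      also have "\<dots> = B * (\<Sum>i<n. b i - a i)" by (simp add: sum_distrib_left)
      also have "\<dots> < B * (\<epsilon> / B)" using H B by (intro mult_strict_left_mono) auto
      also have "\<dots> = \<epsilon>" using B by simp
      finally show "(\<Sum>i<n. \<bar>h (b i) - h (a i)\<bar>) < \<epsilon>" .
    qed
    qed
  qed
qed

lemma meas01:
  fixes h :: "real \<Rightarrow> real"
  assumes "continuous_on {0..1} h"
  shows "h \<in> borel_measurable (restrict_space lborel {0..1})"
proof -
  have "sets (restrict_space lborel {0..1::real}) = sets (restrict_space borel {0..1})"
    by (rule sets_restrict_space_cong) simp
  then show ?thesis
    using borel_measurable_continuous_on_restrict[OF assms] measurable_cong_sets by blast
qed

lemma term_lem: "(W::real) > 0 \<Longrightarrow> \<bar>a\<bar> / W * \<bar>sgn a * W\<bar> powr q = \<bar>a\<bar> / W * W powr q"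
  by (cases "a = 0") (auto simp: abs_mult)

lemma vg_lem: "(s::real) \<noteq> 0 \<Longrightarrow> sgn a * s * (\<bar>a\<bar> / s) = a"
  by (simp add: sgn_if)

theorem mainTheorem2:
  fixes V :: "'a set" and E :: "'e set" and tail head :: "'e \<Rightarrow> 'a" and r :: 'a
    and f f' :: "real \<Rightarrow> 'a \<Rightarrow> real"
  assumes tree: "rooted_tree_away V E tail head r"
    and prob: "\<forall>t\<in>{0..1}. probvec V (f t)"
    and deriv: "\<forall>x\<in>V. \<forall>t\<in>{0..1}. ((\<lambda>\<tau>. f \<tau> x) has_real_derivative f' t x) (at t within {0..1})"
    and cont: "\<forall>x\<in>V. continuous_on {0..1} (\<lambda>t. f' t x)"
  defines "F' \<equiv> \<lambda>t x. \<Sum>y\<in>subtree V E tail head x. f' t y"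
    and "s \<equiv> \<lambda>t. \<Sum>x\<in>V. \<bar>\<Sum>y\<in>subtree V E tail head x. f' t y\<bar>"
  shows "(\<forall>t\<in>{0..1}. has_W1_speed V E tail head f t (s t)) \<and>
    ((W1_geodesic V E tail head f \<and> f 0 \<noteq> f 1) \<longrightarrow>
      (let v = (\<lambda>t k. sgn (F' t (head k)) * s t);
           g = (\<lambda>t k. if k \<in> E then \<bar>F' t (head k)\<bar> / s t else 0)
       in (\<forall>t\<in>{0..1}. s t = W1 V E tail head (f 0) (f 1)) \<and> W1 V E tail head (f 0) (f 1) > 0 \<and>
          transport_eq V E tail head f v g \<and>
          (\<forall>q::real. q \<ge> 1 \<longrightarrow> action_I E q v g = W1 V E tail head (f 0) (f 1))))"
proof -
  interpret T: tok V E tail head r "gdist E tail head r" by (rule rooted_tok[OF tree])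
  define H where "H t = {h. t + h \<in> {0..1::real}}" for t
  define Fx where "Fx t x = (\<Sum>y\<in>subtree V E tail head x. f t y)" for t x
  have hV: "head k \<in> V" if "k \<in> E" for k using T.endV that by auto
  have Fx_deriv: "((\<lambda>\<tau>. Fx \<tau> x) has_real_derivative F' t x) (at t within {0..1})" if "t \<in> {0..1}" for x t
    unfolding Fx_def F'_def
  proof (intro DERIV_sum)
    fix n assume "n \<in> subtree V E tail head x"
    then have "n \<in> V" using T.U_sub by blast
    then show "((\<lambda>\<tau>. f \<tau> n) has_real_derivative f' t n) (at t within {0..1})" using deriv that by blast
  qed
  have F'cont: "continuous_on {0..1} (\<lambda>t. F' t x)" for x
    unfolding F'_def using cont T.U_sub by (intro continuous_on_sum) blast
  have scont: "continuous_on {0..1} s"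
    unfolding s_def using cont T.U_sub by (intro continuous_on_sum continuous_on_rabs) blast
  have s_F: "s t = (\<Sum>x\<in>V. \<bar>F' t x\<bar>)" for t by (simp add: s_def F'_def)
  have Fx1: "Fx t r = 1" if "t \<in> {0..1}" for t
    using prob that T.U_root by (simp add: Fx_def probvec_def)
  have F'r: "F' t r = 0" if t: "t \<in> {0..1}" for t
  proof -
    have l1: "((\<lambda>h. (Fx (t+h) r - Fx t r)/h) \<longlongrightarrow> F' t r) (at 0 within H t)"
      unfolding H_def by (rule dq_tendsto[OF Fx_deriv[OF t]])
    have "\<forall>\<^sub>F h in at 0 within H t. (Fx (t+h) r - Fx t r)/h = 0"
      unfolding eventually_at_filter H_def using Fx1 t by simp
    then have "((\<lambda>h. 0) \<longlongrightarrow> F' t r) (at 0 within H t)"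
      using l1 by (rule Lim_transform_eventually[rotated])
    then show ?thesis using tendsto_unique[OF nontriv01[OF t, folded H_def] _ tendsto_const] by blast
  qed
  have s_E: "s t = (\<Sum>k\<in>E. \<bar>F' t (head k)\<bar>)" if t: "t \<in> {0..1}" for t
  proof -
    have "s t = \<bar>F' t r\<bar> + (\<Sum>x\<in>V - {r}. \<bar>F' t x\<bar>)" using s_F sum.remove[OF T.finV T.rV] by simp
    also have "\<dots> = (\<Sum>x\<in>head ` E. \<bar>F' t x\<bar>)" using F'r[OF t] T.headE by simp
    also have "\<dots> = (\<Sum>k\<in>E. \<bar>F' t (head k)\<bar>)" using sum.reindex[OF T.injh] by simp
    finally show ?thesis .
  qed
  have W1eq: "W1 V E tail head (f a) (f b) = (\<Sum>k\<in>E. \<bar>Fx a (head k) - Fx b (head k)\<bar>)"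
    if "a \<in> {0..1}" "b \<in> {0..1}" for a b
  proof -
    have "W1 V E tail head (f a) (f b) = Tsum V E tail head (f a) (f b)"
      using prob that by (intro W1_tree[OF tree]) (auto simp: probvec_def)
    then show ?thesis by (simp add: Tsum_def Fx_def)
  qed
  have speed: "has_W1_speed V E tail head f t (s t)" if t: "t \<in> {0..1}" for t
  proof -
    have lim: "((\<lambda>h. \<Sum>k\<in>E. \<bar>(Fx (t+h) (head k) - Fx t (head k))/h\<bar>) \<longlongrightarrow> (\<Sum>k\<in>E. \<bar>F' t (head k)\<bar>)) (at 0 within H t)"
      unfolding H_def by (intro tendsto_sum tendsto_rabs dq_tendsto Fx_deriv t)
    have ev: "\<forall>\<^sub>F h in at 0 within H t. (\<Sum>k\<in>E. \<bar>(Fx (t+h) (head k) - Fx t (head k))/h\<bar>) = W1 V E tail head (f (t + h)) (f t) / \<bar>h\<bar>"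
      unfolding eventually_at_filter H_def
    proof (rule always_eventually, intro allI impI)
      fix h :: real assume "h \<in> {h. t + h \<in> {0..1}}"
      then have th: "t + h \<in> {0..1}" by simp
      have "W1 V E tail head (f (t + h)) (f t) / \<bar>h\<bar> = (\<Sum>k\<in>E. \<bar>Fx (t+h) (head k) - Fx t (head k)\<bar>) / \<bar>h\<bar>"
        using W1eq[OF th t] by simp
      also have "\<dots> = (\<Sum>k\<in>E. \<bar>Fx (t+h) (head k) - Fx t (head k)\<bar> / \<bar>h\<bar>)" by (rule sum_divide_distrib)
      also have "\<dots> = (\<Sum>k\<in>E. \<bar>(Fx (t+h) (head k) - Fx t (head k)) / h\<bar>)" by (simp add: abs_divide)
      finally show "(\<Sum>k\<in>E. \<bar>(Fx (t+h) (head k) - Fx t (head k))/h\<bar>) = W1 V E tail head (f (t + h)) (f t) / \<bar>h\<bar>" by simp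
    qed
    have "((\<lambda>h. W1 V E tail head (f (t + h)) (f t) / \<bar>h\<bar>) \<longlongrightarrow> s t) (at 0 within H t)"
      using Lim_transform_eventually[OF lim ev] s_E[OF t] by simp
    then show ?thesis unfolding has_W1_speed_def H_def by simp
  qed
  show ?thesis
  proof (intro conjI ballI impI speed)
    assume geo: "W1_geodesic V E tail head f \<and> f 0 \<noteq> f 1"
    define W where "W = W1 V E tail head (f 0) (f 1)"
    have sW: "s t = W" if t: "t \<in> {0..1}" for t
    proof -
      have "\<forall>\<^sub>F h in at 0 within H t. W = W1 V E tail head (f (t + h)) (f t) / \<bar>h\<bar>"
        unfolding eventually_at_filter H_def
      proof (rule always_eventually, intro allI impI)
        fix h :: real assume h0: "h \<noteq> 0" and "h \<in> {h. t + h \<in> {0..1}}"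
        then have th: "t + h \<in> {0..1}" by simp
        have "W1 V E tail head (f (t + h)) (f t) = \<bar>t + h - t\<bar> * W"
          using geo th t unfolding W1_geodesic_def W_def by blast
        then show "W = W1 V E tail head (f (t + h)) (f t) / \<bar>h\<bar>" using h0 by simp
      qed
      then have "((\<lambda>h. W1 V E tail head (f (t + h)) (f t) / \<bar>h\<bar>) \<longlongrightarrow> W) (at 0 within H t)"
        by (rule Lim_transform_eventually[OF tendsto_const])
      moreover have "((\<lambda>h. W1 V E tail head (f (t + h)) (f t) / \<bar>h\<bar>) \<longlongrightarrow> s t) (at 0 within H t)"
        using speed[OF t] unfolding has_W1_speed_def H_def by simp
      ultimately show ?thesis using tendsto_unique[OF nontriv01[OF t, folded H_def]] by blast
    qed
    have Wpos: "W > 0"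
    proof (rule ccontr)
      assume "\<not> W > 0"
      moreover have "W = (\<Sum>k\<in>E. \<bar>Fx 0 (head k) - Fx 1 (head k)\<bar>)" using W1eq[of 0 1] by (simp add: W_def)
      moreover have "0 \<le> (\<Sum>k\<in>E. \<bar>Fx 0 (head k) - Fx 1 (head k)\<bar>)" by (simp add: sum_nonneg)
      ultimately have "(\<Sum>k\<in>E. \<bar>Fx 0 (head k) - Fx 1 (head k)\<bar>) = 0" by linarith
      then have "\<forall>k\<in>E. \<bar>Fx 0 (head k) - Fx 1 (head k)\<bar> = 0"
        using sum_nonneg_eq_0_iff[OF T.finE, of "\<lambda>k. \<bar>Fx 0 (head k) - Fx 1 (head k)\<bar>"] by simp
      then have eqk: "\<forall>k\<in>E. Fx 0 (head k) = Fx 1 (head k)" by simp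
      have eqx: "Fx 0 x = Fx 1 x" if "x \<in> V" for x
      proof (cases "x = r")
        case True then show ?thesis using Fx1 by simp
      next
        case False
        then have "x \<in> head ` E" using T.headE that by auto
        then show ?thesis using eqk by auto
      qed
      have "f 0 x = f 1 x" for x
      proof (cases "x \<in> V")
        case True
        have dec: "Fx a x = f a x + (\<Sum>k\<in>{k\<in>E. tail k = x}. Fx a (head k))" for a
          unfolding Fx_def by (rule T.sum_U[OF True])
        moreover have "(\<Sum>k\<in>{k\<in>E. tail k = x}. Fx 0 (head k)) = (\<Sum>k\<in>{k\<in>E. tail k = x}. Fx 1 (head k))"
          using eqk by (intro sum.cong) auto
        ultimately show ?thesis using eqx[OF True] dec[of 0] dec[of 1] by linarith
      next
        case False
        then show ?thesis using prob by (auto simp: probvec_def)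
      qed
      then have "f 0 = f 1" by auto
      then show False using geo by simp
    qed
    have vg: "sgn (F' t (head k)) * s t * (\<bar>F' t (head k)\<bar> / s t) = F' t (head k)" if "t \<in> {0..1}" for t k
      using sW[OF that] Wpos by (intro vg_lem) simp
    show "let v = (\<lambda>t k. sgn (F' t (head k)) * s t);
           g = (\<lambda>t k. if k \<in> E then \<bar>F' t (head k)\<bar> / s t else 0)
       in (\<forall>t\<in>{0..1}. s t = W1 V E tail head (f 0) (f 1)) \<and> W1 V E tail head (f 0) (f 1) > 0 \<and>
          transport_eq V E tail head f v g \<and>
          (\<forall>q::real. q \<ge> 1 \<longrightarrow> action_I E q v g = W1 V E tail head (f 0) (f 1))"
      unfolding Let_def W_def[symmetric]
    proof (intro conjI ballI allI impI)
      show "s t = W" if "t \<in> {0..1}" for t using sW that by simp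
      show "0 < W" by (rule Wpos)
    next
      have key6: "f' t x = (\<Sum>k\<in>E. incid tail head x k * (sgn (F' t (head k)) * s t) * (if k \<in> E then \<bar>F' t (head k)\<bar> / s t else 0))"
        if t: "t \<in> {0..1}" and x: "x \<in> V" for t x
      proof -
        have "(\<Sum>k\<in>E. incid tail head x k * (sgn (F' t (head k)) * s t) * (if k \<in> E then \<bar>F' t (head k)\<bar> / s t else 0))
            = (\<Sum>k\<in>E. (if head k = x then F' t (head k) else 0) - (if tail k = x then F' t (head k) else 0))"
        proof (rule sum.cong[OF refl])
          fix k assume k: "k \<in> E"
          have ne: "tail k \<noteq> head k" using T.depE[OF k] by auto
          have "incid tail head x k * (sgn (F' t (head k)) * s t) * (if k \<in> E then \<bar>F' t (head k)\<bar> / s t else 0)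
              = incid tail head x k * (sgn (F' t (head k)) * s t * (\<bar>F' t (head k)\<bar> / s t))" using k by simp
          also have "\<dots> = incid tail head x k * F' t (head k)" using vg[OF t] by simp
          also have "\<dots> = (if head k = x then F' t (head k) else 0) - (if tail k = x then F' t (head k) else 0)"
            using ne by (auto simp: incid_def)
          finally show "incid tail head x k * (sgn (F' t (head k)) * s t) * (if k \<in> E then \<bar>F' t (head k)\<bar> / s t else 0)
              = (if head k = x then F' t (head k) else 0) - (if tail k = x then F' t (head k) else 0)" .
        qed
        also have "\<dots> = (\<Sum>k\<in>E. (if head k = x then F' t (head k) else 0)) - (\<Sum>k\<in>E. (if tail k = x then F' t (head k) else 0))"
          by (rule sum_subtractf)
        also have "(\<Sum>k\<in>E. (if head k = x then F' t (head k) else 0)) = F' t x"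
        proof -
          have "(\<Sum>k\<in>E. (if head k = x then F' t (head k) else 0)) = (\<Sum>y\<in>head ` E. (if y = x then F' t y else 0))"
            using sum.reindex[OF T.injh, of "\<lambda>y. if y = x then F' t y else 0"] by simp
          also have "\<dots> = (if x \<in> head ` E then F' t x else 0)" using T.finE by (simp add: sum.delta')
          also have "\<dots> = F' t x" using T.headE x F'r[OF t] by auto
          finally show ?thesis .
        qed
        also have "(\<Sum>k\<in>E. (if tail k = x then F' t (head k) else 0)) = (\<Sum>k\<in>{k\<in>E. tail k = x}. F' t (head k))"
          using sum.inter_filter[OF T.finE, of "\<lambda>k. F' t (head k)" "\<lambda>k. tail k = x"] by simp
        also have "F' t x = f' t x + (\<Sum>k\<in>{k\<in>E. tail k = x}. F' t (head k))"
          unfolding F'_def by (rule T.sum_U[OF x])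
        finally show ?thesis by simp
      qed
      show "transport_eq V E tail head f (\<lambda>t k. sgn (F' t (head k)) * s t)
          (\<lambda>t k. if k \<in> E then \<bar>F' t (head k)\<bar> / s t else 0)"
        unfolding transport_eq_def
      proof (intro conjI)
        show "\<forall>t\<in>{0..1}. probvec V (f t)" by (rule prob)
        show "\<forall>x\<in>V. abs_cont_on {0..1} (\<lambda>t. f t x)"
          using deriv cont by (auto intro!: absc)
        show "\<forall>k\<in>E. (\<lambda>t. sgn (F' t (head k)) * s t) \<in> borel_measurable (restrict_space lborel {0..1})"
        proof
          fix k
          have "(\<lambda>t. sgn (F' t (head k))) \<in> borel_measurable (restrict_space lborel {0..1})"
            by (rule measurable_compose[OF meas01[OF F'cont] borel_measurable_sgn])
          then show "(\<lambda>t. sgn (F' t (head k)) * s t) \<in> borel_measurable (restrict_space lborel {0..1})"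
            by (rule borel_measurable_times[OF _ meas01[OF scont]])
        qed
        show "\<forall>k\<in>E. (\<lambda>t. if k \<in> E then \<bar>F' t (head k)\<bar> / s t else 0) \<in> borel_measurable (restrict_space lborel {0..1})"
        proof
          fix k assume k: "k \<in> E"
          have "(\<lambda>t. \<bar>F' t (head k)\<bar> / s t) \<in> borel_measurable (restrict_space lborel {0..1})"
            by (rule borel_measurable_divide[OF borel_measurable_abs[OF meas01[OF F'cont]] meas01[OF scont]])
          then show "(\<lambda>t. if k \<in> E then \<bar>F' t (head k)\<bar> / s t else 0) \<in> borel_measurable (restrict_space lborel {0..1})"
            using k by simp
        qed
        show "\<forall>t\<in>{0..1}. probvec E (\<lambda>k. if k \<in> E then \<bar>F' t (head k)\<bar> / s t else 0)"
        proof
          fix t :: real assume t: "t \<in> {0..1}"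
          have st: "s t = W" using sW[OF t] .
          have "(\<Sum>k\<in>E. if k \<in> E then \<bar>F' t (head k)\<bar> / s t else 0) = (\<Sum>k\<in>E. \<bar>F' t (head k)\<bar>) / s t"
            by (simp add: sum_divide_distrib)
          also have "\<dots> = 1" using s_E[OF t] st Wpos by simp
          finally show "probvec E (\<lambda>k. if k \<in> E then \<bar>F' t (head k)\<bar> / s t else 0)"
            unfolding probvec_def using st Wpos by auto
        qed
        show "AE t in lborel. t \<in> {0..1} \<longrightarrow> (\<forall>x\<in>V. ((\<lambda>\<tau>. f \<tau> x) has_real_derivative
            (\<Sum>k\<in>E. incid tail head x k * (sgn (F' t (head k)) * s t) * (if k \<in> E then \<bar>F' t (head k)\<bar> / s t else 0))) (at t within {0..1}))"
        proof (rule always_eventually, intro allI impI ballI)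
          fix t :: real and x assume t: "t \<in> {0..1}" and x: "x \<in> V"
          show "((\<lambda>\<tau>. f \<tau> x) has_real_derivative
            (\<Sum>k\<in>E. incid tail head x k * (sgn (F' t (head k)) * s t) * (if k \<in> E then \<bar>F' t (head k)\<bar> / s t else 0))) (at t within {0..1})"
            unfolding key6[OF t x, symmetric] using deriv t x by blast
        qed
      qed
    next
      fix q :: real assume q: "q \<ge> 1"
      have int: "(\<Sum>k\<in>E. (if k \<in> E then \<bar>F' t (head k)\<bar> / s t else 0) * \<bar>sgn (F' t (head k)) * s t\<bar> powr q) = W powr q"
        if t: "t \<in> {0..1}" for t
      proof -
        have st: "s t = W" using sW[OF t] .
        have "(\<Sum>k\<in>E. (if k \<in> E then \<bar>F' t (head k)\<bar> / s t else 0) * \<bar>sgn (F' t (head k)) * s t\<bar> powr q)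
            = (\<Sum>k\<in>E. \<bar>F' t (head k)\<bar> / W * W powr q)"
          using st term_lem[OF Wpos] by (intro sum.cong) auto
        also have "\<dots> = (\<Sum>k\<in>E. \<bar>F' t (head k)\<bar>) / W * W powr q"
          by (simp add: sum_distrib_right sum_divide_distrib)
        also have "\<dots> = W powr q" using s_E[OF t] st Wpos by simp
        finally show ?thesis .
      qed
      have "integral {0..1} (\<lambda>t. \<Sum>k\<in>E. (if k \<in> E then \<bar>F' t (head k)\<bar> / s t else 0) * \<bar>sgn (F' t (head k)) * s t\<bar> powr q)
          = integral {0..1} (\<lambda>t::real. W powr q)"
        using int by (intro Henstock_Kurzweil_Integration.integral_cong) auto
      also have "\<dots> = W powr q" by simp
      finally have I: "integral {0..1} (\<lambda>t. \<Sum>k\<in>E. (if k \<in> E then \<bar>F' t (head k)\<bar> / s t else 0) * \<bar>sgn (F' t (head k)) * s t\<bar> powr q)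
          = W powr q" .
      have "(W powr q) powr (1 / q) = W powr (q * (1 / q))" by (simp add: powr_powr)
      also have "\<dots> = W" using q Wpos by simp
      finally show "action_I E q (\<lambda>t k. sgn (F' t (head k)) * s t) (\<lambda>t k. if k \<in> E then \<bar>F' t (head k)\<bar> / s t else 0) = W"
        unfolding action_I_def using I by simp
    qed
  qed
qed

end
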